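(* Let $\mathcal{K}\subseteq\mathbb{R}^m$ be a closed convex cone with dual cone $\mathcal{K}^*$, and let $f$ be a $\nu$-logarithmically-homogeneous self-concordant barrier (LHSCB) for $\mathcal{K}$. Let $(x^*,s^*,z^* )$ be a solution of a given (previous) optimization problem, let $\mu^0>0$ and $\lambda>0$. Define $c:=s^*-\lambda z^*$, $$s^0:=S_{\mathcal{K},\mu^0}(c)=\arg\min_{s\in\operatorname{int}\mathcal{K}}\ \tfrac12\|s-c\|_2^2+\mu^0 f(s),\qquad z^0:=\frac{s^0-(s^*-\lambda z^* )}{\lambda},\qquad x^0:=x^*.$$ Then $(s^0,z^0)\in\operatorname{int}\mathcal{K}\times\operatorname{int}\mathcal{K}^*$. Moreover, the point $(x^0,s^0,z^0)$ lies on the central path parametrized by $$R(x,s,z)=\mu r^0,\qquad z=-\mu\nabla f(s),$$ where $r^0=\frac{\lambda}{\mu^0}R(x^0,s^0,z^0)$, and $\langle s^0,z^0\rangle=\frac{\nu\mu^0}{\lambda}$; i.e. $(s^0,z^0)$ is on this central path with parameter $\mu=\mu^0/\lambda$.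
   Context: Consider the conic problem $\min_{x,s}\frac12 x^\top Px+q^\top x$ s.t. $Ax+s=b$, $s\in\mathcal{K}$, with $P\in\mathbb{R}^{n\times n}$ symmetric positive semidefinite, $A\in\mathbb{R}^{m\times n}$, $q\in\mathbb{R}^n$, $b\in\mathbb{R}^m$. The residual map is $$R(x,s,z)=\begin{bmatrix}r_d\\ r_p\end{bmatrix}:=\begin{bmatrix}P & A^\top\\ -A & 0\end{bmatrix}\begin{bmatrix}x\\ z\end{bmatrix}+\begin{bmatrix}q\\ b\end{bmatrix}-\begin{bmatrix}0\\ s\end{bmatrix}.$$ A function $f:\operatorname{int}\mathcal{K}\to\mathbb{R}$ is self-concordant if $f(s)\to+\infty$ along any sequence in $\operatorname{int}\mathcal{K}$ converging to a boundary point of $\mathcal{K}$ and $|\nabla^3 f(s)[r,r,r]|\le 2(\nabla^2 f(s)[r,r])^{3/2}$ for all $s\in\operatorname{int}\mathcal{K}$, $r\in\mathbb{R}^m$; it is a $\nu$-LHSCB (of degree $\nu>0$) if moreover $f(\tau s)=f(s)-\nu\log\tau$ for all $s\in\operatorname{int}\mathcal{K}$, $\tau>0$. *)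

theory Defs
  imports "HOL-Analysis.Analysis"
begin

definition dual_cone :: "('a::real_inner) set \<Rightarrow> 'a set" where
  "dual_cone K = {z. \<forall>s\<in>K. s \<bullet> z \<ge> 0}"

definition grad :: "('a::real_inner \<Rightarrow> real) \<Rightarrow> 'a \<Rightarrow> 'a" where
  "grad f s = (SOME g. (f has_derivative (\<lambda>h. g \<bullet> h)) (at s))"

definition self_concordant :: "('a::euclidean_space) set \<Rightarrow> ('a \<Rightarrow> real) \<Rightarrow> bool" where
  "self_concordant K f \<longleftrightarrow>
     (\<forall>x p. (\<forall>k. x k \<in> interior K) \<longrightarrow> x \<longlonglongrightarrow> p \<longrightarrow> p \<in> frontier K
            \<longrightarrow> filterlim (\<lambda>k. f (x k)) at_top sequentially) \<and>
     (\<exists>D1 D2 D3.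
        (\<forall>s\<in>interior K. (f has_derivative D1 s) (at s)) \<and>
        (\<forall>s\<in>interior K. \<forall>h. ((\<lambda>t. D1 t h) has_derivative D2 s h) (at s)) \<and>
        (\<forall>s\<in>interior K. \<forall>h k. ((\<lambda>t. D2 t h k) has_derivative D3 s h k) (at s)) \<and>
        (\<forall>s\<in>interior K. \<forall>r. 0 \<le> D2 s r r \<and>
              \<bar>D3 s r r r\<bar> \<le> 2 * (D2 s r r) powr (3/2)))"

definition LHSCB :: "('a::euclidean_space) set \<Rightarrow> ('a \<Rightarrow> real) \<Rightarrow> real \<Rightarrow> bool" where
  "LHSCB K f \<nu> \<longleftrightarrow> \<nu> > 0 \<and> self_concordant K f \<and>
     (\<forall>s\<in>interior K. \<forall>\<tau>>0. f (\<tau> *\<^sub>R s) = f s - \<nu> * ln \<tau>)"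

definition barrier_prox :: "('a::euclidean_space) set \<Rightarrow> real \<Rightarrow> ('a \<Rightarrow> real) \<Rightarrow> 'a \<Rightarrow> 'a" where
  "barrier_prox K \<mu> f c = arg_min_on (\<lambda>s. (1/2) * (norm (s - c))\<^sup>2 + \<mu> * f s) (interior K)"

definition residual ::
  "real^'n^'n \<Rightarrow> real^'n \<Rightarrow> real^'n^'m \<Rightarrow> real^'m \<Rightarrow> real^'n \<Rightarrow> real^'m \<Rightarrow> real^'m
     \<Rightarrow> (real^'n) \<times> (real^'m)" where
  "residual P q A b x s z =
     (P *v x + transpose A *v z + q, - (A *v x) + b - s)"

definition psd :: "real^'n^'n \<Rightarrow> bool" where
  "psd P \<longleftrightarrow> transpose P = P \<and> (\<forall>x. 0 \<le> x \<bullet> (P *v x))"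

end

theory Submission
  imports Defs
begin

lemma sc_zero:
  fixes \<psi> \<psi>' :: "real \<Rightarrow> real"
  assumes ac: "a < c"
    and der: "\<And>t. a \<le> t \<Longrightarrow> t \<le> c \<Longrightarrow> (\<psi> has_real_derivative \<psi>' t) (at t)"
    and bnd: "\<And>t. a \<le> t \<Longrightarrow> t \<le> c \<Longrightarrow> 0 \<le> \<psi> t \<and> \<bar>\<psi>' t\<bar> \<le> 2 * (\<psi> t) powr (3/2)"
    and z: "\<psi> c = 0"
  shows "\<psi> a = 0"
proof -
  have cont: "continuous_on {a..c} \<psi>"
    by (metis DERIV_isCont atLeastAtMost_iff continuous_at_imp_continuous_on der)
  obtain m where m: "m \<in> {a..c}" "\<And>t. t \<in> {a..c} \<Longrightarrow> \<psi> t \<le> \<psi> m"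
    using continuous_attains_sup[OF compact_Icc _ cont] ac by auto
  define L where "L = 2 * sqrt (\<psi> m)"
  have Lnn: "L \<ge> 0" unfolding L_def using bnd m(1) by simp
  have low: "- L * \<psi> t \<le> \<psi>' t" if t: "a \<le> t" "t \<le> c" for t
  proof -
    have p0: "0 \<le> \<psi> t" using bnd t by simp
    have "\<psi> t powr (3/2) = \<psi> t * sqrt (\<psi> t)"
    proof (cases "\<psi> t = 0")
      case False
      then have "\<psi> t powr (3/2) = \<psi> t powr 1 * \<psi> t powr (1/2)"
        using p0 powr_add[of "\<psi> t" 1 "1/2"] by (simp del: powr_one)
      then show ?thesis using p0 by (simp add: powr_half_sqrt)
    qed simp
    moreover have "sqrt (\<psi> t) \<le> sqrt (\<psi> m)" using m(2)[of t] t by simp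
    then have "\<psi> t * sqrt (\<psi> t) \<le> \<psi> t * sqrt (\<psi> m)" using p0 by (simp add: mult_left_mono)
    ultimately have "\<bar>\<psi>' t\<bar> \<le> L * \<psi> t" using bnd[OF t] unfolding L_def by (simp add: algebra_simps)
    then show ?thesis by simp
  qed
  define k where "k t = \<psi> t * exp (L * t)" for t
  have "k a \<le> k c"
  proof (rule DERIV_nonneg_imp_nondecreasing[OF less_imp_le[OF ac]])
    fix t assume t: "a \<le> t" "t \<le> c"
    have "(k has_real_derivative (\<psi>' t * exp (L * t) + \<psi> t * (exp (L * t) * L))) (at t)"
      unfolding k_def by (auto intro!: derivative_eq_intros der[OF t])
    moreover have "0 \<le> \<psi>' t * exp (L * t) + \<psi> t * (exp (L * t) * L)"
    proof -
      have "0 \<le> (\<psi>' t + L * \<psi> t) * exp (L * t)" using low[OF t] by simp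
      then show ?thesis by (simp add: algebra_simps)
    qed
    ultimately show "\<exists>y. (k has_real_derivative y) (at t) \<and> 0 \<le> y" by blast
  qed
  then have "\<psi> a * exp (L * a) \<le> 0" using z unfolding k_def by simp
  then have "\<psi> a \<le> 0" by (simp add: mult_le_0_iff)
  then show ?thesis using bnd[of a] ac by simp
qed

locale lhs =
  fixes K :: "'a::euclidean_space set" and f :: "'a \<Rightarrow> real" and \<nu> :: real
    and D1 :: "'a \<Rightarrow> 'a \<Rightarrow> real" and D2 :: "'a \<Rightarrow> 'a \<Rightarrow> 'a \<Rightarrow> real"
    and D3 :: "'a \<Rightarrow> 'a \<Rightarrow> 'a \<Rightarrow> 'a \<Rightarrow> real"
  assumes clo: "closed K" and cvx: "convex K" and cne: "cone K"
    and ne: "interior K \<noteq> {}" and pointed: "K \<inter> uminus ` K = {0}"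
    and nupos: "\<nu> > 0"
    and bar: "\<And>x p. (\<forall>k. x k \<in> interior K) \<Longrightarrow> x \<longlonglongrightarrow> p \<Longrightarrow> p \<in> frontier K
            \<Longrightarrow> filterlim (\<lambda>k. f (x k)) at_top sequentially"
    and d1: "\<And>s. s\<in>interior K \<Longrightarrow> (f has_derivative D1 s) (at s)"
    and d2: "\<And>s h. s\<in>interior K \<Longrightarrow> ((\<lambda>t. D1 t h) has_derivative D2 s h) (at s)"
    and d3: "\<And>s h k. s\<in>interior K \<Longrightarrow> ((\<lambda>t. D2 t h k) has_derivative D3 s h k) (at s)"
    and sc: "\<And>s r. s\<in>interior K \<Longrightarrow> 0 \<le> D2 s r r \<and> \<bar>D3 s r r r\<bar> \<le> 2 * (D2 s r r) powr (3/2)"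
    and hom: "\<And>s \<tau>. s\<in>interior K \<Longrightarrow> \<tau> > 0 \<Longrightarrow> f (\<tau> *\<^sub>R s) = f s - \<nu> * ln \<tau>"
begin

lemma add_mem: "x \<in> K \<Longrightarrow> y \<in> K \<Longrightarrow> x + y \<in> K"
  using convex_cone cvx cne by blast

lemma scale_mem: "x \<in> K \<Longrightarrow> c \<ge> 0 \<Longrightarrow> c *\<^sub>R x \<in> K"
  using convex_cone cvx cne by blast

lemma int_add: assumes "y \<in> interior K" "u \<in> K" shows "y + u \<in> interior K"
proof -
  obtain e where e: "e > 0" "ball y e \<subseteq> K" using assms(1) mem_interior by blast
  have "ball (y+u) e \<subseteq> K"
  proof
    fix w assume "w \<in> ball (y+u) e"
    then have "w - u \<in> ball y e" by (simp add: dist_norm algebra_simps)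
    then have "(w - u) + u \<in> K" using e add_mem assms(2) by blast
    then show "w \<in> K" by simp
  qed
  then show ?thesis using e mem_interior by blast
qed

lemma int_scale: assumes "y \<in> interior K" "c > 0" shows "c *\<^sub>R y \<in> interior K"
proof -
  obtain e where e: "e > 0" "ball y e \<subseteq> K" using assms(1) mem_interior by blast
  have "ball (c *\<^sub>R y) (c*e) \<subseteq> K"
  proof
    fix w assume "w \<in> ball (c *\<^sub>R y) (c*e)"
    then have "dist (c *\<^sub>R y) w < c * e" by simp
    moreover have "dist (c *\<^sub>R y) w = c * dist y ((1/c) *\<^sub>R w)"
    proof -
      have "c *\<^sub>R y - w = c *\<^sub>R (y - (1/c) *\<^sub>R w)" using assms(2) by (simp add: algebra_simps)
      then show ?thesis using assms(2) by (simp add: dist_norm)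
    qed
    ultimately have "(1/c) *\<^sub>R w \<in> ball y e" using assms(2) by simp
    then have "(1/c) *\<^sub>R w \<in> K" using e by blast
    then have "c *\<^sub>R ((1/c) *\<^sub>R w) \<in> K" by (rule scale_mem) (use assms(2) in simp)
    then show "w \<in> K" using assms(2) by simp
  qed
  then show ?thesis using e mem_interior assms(2) by (meson mult_pos_pos)
qed

lemma D1_lin: "s \<in> interior K \<Longrightarrow> bounded_linear (D1 s)"
  using d1 has_derivative_bounded_linear by blast
lemma D2_lin: "s \<in> interior K \<Longrightarrow> bounded_linear (D2 s h)"
  using d2 has_derivative_bounded_linear by blast
lemma D3_lin: "s \<in> interior K \<Longrightarrow> bounded_linear (D3 s h k)"
  using d3 has_derivative_bounded_linear by blast

lemma line_deriv:
  fixes g :: "'a \<Rightarrow> real" and G :: "'a \<Rightarrow> 'a \<Rightarrow> real"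
  assumes "y + t *\<^sub>R u \<in> interior K"
    and "(g has_derivative G (y + t *\<^sub>R u)) (at (y + t *\<^sub>R u))"
  shows "((\<lambda>t. g (y + t *\<^sub>R u)) has_real_derivative G (y + t *\<^sub>R u) u) (at t)"
proof -
  have l: "bounded_linear (G (y + t *\<^sub>R u))" using assms(2) has_derivative_bounded_linear by blast
  have a: "((\<lambda>t. y + t *\<^sub>R u) has_derivative (\<lambda>h. h *\<^sub>R u)) (at t)"
    by (auto intro!: derivative_eq_intros)
  have "((\<lambda>t. g (y + t *\<^sub>R u)) has_derivative (\<lambda>h. G (y + t *\<^sub>R u) (h *\<^sub>R u))) (at t)"
    using has_derivative_compose[OF a assms(2)] by simp
  moreover have "(\<lambda>h. G (y + t *\<^sub>R u) (h *\<^sub>R u)) = (*) (G (y + t *\<^sub>R u) u)"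
    using l by (auto simp: linear_scale[OF bounded_linear.linear[OF l]] mult.commute)
  ultimately show ?thesis by (simp add: has_field_derivative_def)
qed

lemma cont_f: "continuous_on (interior K) f"
  by (metis continuous_at_imp_continuous_on d1 has_derivative_continuous)

lemma hom_deriv: assumes s: "s \<in> interior K" shows "D1 s s = - \<nu>"
proof -
  have "((\<lambda>t. f (0 + t *\<^sub>R s)) has_real_derivative D1 (0 + 1 *\<^sub>R s) s) (at 1)"
    by (rule line_deriv) (use s d1 in auto)
  then have a: "((\<lambda>t. f (t *\<^sub>R s)) has_real_derivative D1 s s) (at 1)" by simp
  have b: "((\<lambda>t. f s - \<nu> * ln t) has_real_derivative (- \<nu>)) (at 1)"
    by (auto intro!: derivative_eq_intros)
  have c: "((\<lambda>t. f (t *\<^sub>R s)) has_real_derivative (- \<nu>)) (at 1)"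
    by (rule has_field_derivative_transform_within_open[OF b, of "{0<..}"]) (use hom s in auto)
  show ?thesis using DERIV_unique[OF a c] .
qed

lemma seg: assumes "w \<in> interior K" "x \<in> interior K" "0 \<le> t" "t \<le> 1"
  shows "w + t *\<^sub>R (x - w) \<in> interior K"
proof -
  have "(1-t) *\<^sub>R w + t *\<^sub>R x \<in> interior K"
    using convexD[OF convex_interior[OF cvx] assms(1,2), of "1-t" t] assms(3,4) by simp
  moreover have "(1-t) *\<^sub>R w + t *\<^sub>R x = w + t *\<^sub>R (x - w)" by (simp add: algebra_simps)
  ultimately show ?thesis by simp
qed

lemma conv_ineq: assumes w: "w \<in> interior K" and x: "x \<in> interior K"
  shows "f w + D1 w (x - w) \<le> f x"
proof -
  define d where "d = x - w"
  have P: "w + t *\<^sub>R d \<in> interior K" if "0 \<le> t" "t \<le> 1" for t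
    using seg[OF w x that] d_def by simp
  have D0: "((\<lambda>t. f (w + t *\<^sub>R d)) has_real_derivative D1 (w + t *\<^sub>R d) d) (at t)"
    if "0 \<le> t" "t \<le> 1" for t
    by (rule line_deriv) (use P[OF that] d1 in auto)
  have D1': "((\<lambda>t. D1 (w + t *\<^sub>R d) d) has_real_derivative D2 (w + t *\<^sub>R d) d d) (at t)"
    if "0 \<le> t" "t \<le> 1" for t
    by (rule line_deriv[where g="\<lambda>z. D1 z d"]) (use P[OF that] d2 in auto)
  obtain z where z: "0 < z" "z < 1" "f (w + 1 *\<^sub>R d) - f (w + 0 *\<^sub>R d) = (1 - 0) * D1 (w + z *\<^sub>R d) d"
    using MVT2[of 0 1 "\<lambda>t. f (w + t *\<^sub>R d)" "\<lambda>t. D1 (w + t *\<^sub>R d) d"] D0 by auto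
  have "D1 (w + 0 *\<^sub>R d) d \<le> D1 (w + z *\<^sub>R d) d"
  proof (rule DERIV_nonneg_imp_nondecreasing[of 0 z])
    fix t assume t: "0 \<le> t" "t \<le> z"
    then have t1: "t \<le> 1" using z by simp
    show "\<exists>y. ((\<lambda>t. D1 (w + t *\<^sub>R d) d) has_real_derivative y) (at t) \<and> 0 \<le> y"
      by (intro exI[of _ "D2 (w + t *\<^sub>R d) d d"] conjI D1'[OF t(1) t1]) (use sc P[OF t(1) t1] in blast)
  qed (use z in simp)
  then show ?thesis using z d_def by simp
qed

lemma D1_nonpos_int: assumes w: "w \<in> interior K" and v: "v \<in> interior K"
  shows "D1 w v \<le> 0"
proof (rule ccontr)
  assume "\<not> D1 w v \<le> 0"
  then have a: "D1 w v > 0" by simp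
  define C where "C = f v - f w - \<nu>"
  define \<tau> where "\<tau> = max 1 ((\<bar>C\<bar> + 1) / D1 w v)"
  have t1: "\<tau> \<ge> 1" unfolding \<tau>_def by simp
  have "(\<bar>C\<bar> + 1) / D1 w v * D1 w v \<le> \<tau> * D1 w v"
    using a unfolding \<tau>_def by (intro mult_right_mono) auto
  then have big: "\<bar>C\<bar> + 1 \<le> \<tau> * D1 w v" using a by simp
  have tv: "\<tau> *\<^sub>R v \<in> interior K" using int_scale v t1 by simp
  have lin: "linear (D1 w)" using D1_lin[OF w] bounded_linear.linear by blast
  have "f w + D1 w (\<tau> *\<^sub>R v - w) \<le> f (\<tau> *\<^sub>R v)" using conv_ineq[OF w tv] .
  moreover have "D1 w (\<tau> *\<^sub>R v - w) = \<tau> * D1 w v + \<nu>"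
    using hom_deriv[OF w] linear_diff[OF lin] linear_scale[OF lin] by simp
  moreover have "f (\<tau> *\<^sub>R v) = f v - \<nu> * ln \<tau>" using hom v t1 by simp
  moreover have "\<nu> * ln \<tau> \<ge> 0" using nupos t1 by simp
  ultimately show False using big unfolding C_def by linarith
qed

lemma D1_nonpos: assumes w: "w \<in> interior K" and v: "v \<in> K"
  shows "D1 w v \<le> 0"
proof (rule ccontr)
  assume "\<not> D1 w v \<le> 0"
  then have a: "D1 w v > 0" by simp
  define \<delta> where "\<delta> = D1 w v / (2 * \<nu>)"
  have dp: "\<delta> > 0" using a nupos unfolding \<delta>_def by simp
  have "\<delta> *\<^sub>R w + v \<in> interior K" using int_add[OF int_scale[OF w dp] v] .
  then have "v + \<delta> *\<^sub>R w \<in> interior K" by (simp add: add.commute)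
  then have le: "D1 w (v + \<delta> *\<^sub>R w) \<le> 0" using D1_nonpos_int[OF w] by blast
  have lin: "linear (D1 w)" using D1_lin[OF w] bounded_linear.linear by blast
  have "D1 w (v + \<delta> *\<^sub>R w) = D1 w v - \<delta> * \<nu>"
    using hom_deriv[OF w] linear_add[OF lin] linear_scale[OF lin] by simp
  moreover have "\<delta> * \<nu> = D1 w v / 2" unfolding \<delta>_def using nupos by simp
  ultimately show False using le a by linarith
qed

lemma D1_neg: assumes y: "y \<in> interior K" and u: "u \<in> K" and u0: "u \<noteq> 0"
  shows "D1 y u < 0"
proof (rule ccontr)
  assume "\<not> D1 y u < 0"
  then have Dy0: "D1 y u = 0" using D1_nonpos[OF y u] by simp
  define T where "T = {t. y + t *\<^sub>R u \<in> interior K}"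
  have up: "r \<in> T" if "t \<in> T" "t \<le> r" for t r
  proof -
    have "(r - t) *\<^sub>R u \<in> K" using scale_mem[OF u] that by simp
    then have "(y + t *\<^sub>R u) + (r - t) *\<^sub>R u \<in> interior K" using int_add that T_def by simp
    then show ?thesis unfolding T_def by (simp add: algebra_simps)
  qed
  have T0: "0 \<in> T" using y T_def by simp
  have Tnn: "t \<in> T" if "t \<ge> 0" for t using up[OF T0 that] .
  have "\<exists>n::nat. - (real n + 1) \<notin> T"
  proof (rule ccontr)
    assume "\<not> ?thesis"
    then have all: "\<And>n::nat. y + (- (real n + 1)) *\<^sub>R u \<in> K" unfolding T_def using interior_subset by blast
    have mem: "inverse (real (Suc n)) *\<^sub>R y - u \<in> K" for n
    proof -
      have "inverse (real (Suc n)) *\<^sub>R (y + (- (real n + 1)) *\<^sub>R u) \<in> K"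
        using scale_mem[OF all[of n]] by simp
      moreover have "inverse (real (Suc n)) *\<^sub>R (y + (- (real n + 1)) *\<^sub>R u) = inverse (real (Suc n)) *\<^sub>R y - u"
      proof -
        have "inverse (real (Suc n)) * (- (real n + 1)) = -1" by (simp add: field_simps)
        then show ?thesis by (simp add: scaleR_right_distrib del: of_nat_Suc)
      qed
      ultimately show ?thesis by simp
    qed
    have "(\<lambda>n. inverse (real (Suc n)) *\<^sub>R y - u) \<longlonglongrightarrow> 0 *\<^sub>R y - u"
      by (intro tendsto_intros LIMSEQ_inverse_real_of_nat)
    then have "- u \<in> K" using closed_sequentially[OF clo mem] by simp
    then have "u \<in> uminus ` K" by (metis image_eqI minus_minus)
    then have "u \<in> K \<inter> uminus ` K" using u by simp
    then show False using pointed u0 by simp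
  qed
  then obtain n :: nat where n: "- (real n + 1) \<notin> T" by blast
  have bdd: "bdd_below T"
  proof (rule bdd_belowI)
    fix t assume "t \<in> T"
    then show "- (real n + 1) \<le> t" using up n by (meson linorder_le_cases)
  qed
  define t1 where "t1 = Inf T"
  have openT: "open T"
  proof -
    have "T = (\<lambda>t. y + t *\<^sub>R u) -` interior K" unfolding T_def by auto
    moreover have "open ((\<lambda>t. y + t *\<^sub>R u) -` interior K)"
      by (rule continuous_open_vimage) (auto intro!: continuous_intros)
    ultimately show ?thesis by simp
  qed
  have t1T: "t1 \<notin> T"
  proof
    assume "t1 \<in> T"
    then obtain e where e: "e > 0" "ball t1 e \<subseteq> T" using openT open_contains_ball by blast
    then have "t1 - e/2 \<in> T" by (auto simp: dist_real_def)
    then have "t1 \<le> t1 - e/2" unfolding t1_def using cInf_lower bdd by blast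
    then show False using e by simp
  qed
  have t1neg: "t1 < 0" using t1T T0 cInf_lower[OF T0 bdd] unfolding t1_def by (metis order_le_less)
  have gt: "t \<in> T" if tt: "t1 < t" for t
  proof -
    obtain t' where "t' \<in> T" "t' < t" using cInf_less_iff[of T t] T0 bdd tt t1_def by auto
    then show ?thesis using up by simp
  qed
  define \<phi>1 where "\<phi>1 t = D1 (y + t *\<^sub>R u) u" for t
  define \<psi> where "\<psi> t = D2 (y + t *\<^sub>R u) u u" for t
  define \<psi>' where "\<psi>' t = D3 (y + t *\<^sub>R u) u u u" for t
  have dphi: "((\<lambda>t. f (y + t *\<^sub>R u)) has_real_derivative \<phi>1 t) (at t)" if "t \<in> T" for t
    unfolding \<phi>1_def by (rule line_deriv) (use that d1 T_def in auto)
  have dphi1: "(\<phi>1 has_real_derivative \<psi> t) (at t)" if "t \<in> T" for t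
    unfolding \<phi>1_def \<psi>_def by (rule line_deriv[where g="\<lambda>z. D1 z u"]) (use that d2 T_def in auto)
  have dpsi: "(\<psi> has_real_derivative \<psi>' t) (at t)" if "t \<in> T" for t
    unfolding \<psi>'_def \<psi>_def by (rule line_deriv[where g="\<lambda>z. D2 z u u"]) (use that d3 T_def in auto)
  have scl: "0 \<le> \<psi> t \<and> \<bar>\<psi>' t\<bar> \<le> 2 * (\<psi> t) powr (3/2)" if "t \<in> T" for t
    unfolding \<psi>_def \<psi>'_def using sc that T_def by simp
  have phi1_le: "\<phi>1 t \<le> 0" if "t \<in> T" for t
    unfolding \<phi>1_def using D1_nonpos[OF _ u] that T_def by simp
  have mono: "\<phi>1 a \<le> \<phi>1 b" if "a \<in> T" "a \<le> b" for a b
    by (rule DERIV_nonneg_imp_nondecreasing[OF that(2)])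
       (use dphi1 scl up that in blast)
  have phi1_0: "\<phi>1 t = 0" if "t \<ge> 0" for t
    using mono[OF T0 that] phi1_le[OF Tnn[OF that]] Dy0 unfolding \<phi>1_def by simp
  have psi1: "\<psi> 1 = 0"
  proof -
    have "((\<lambda>_. 0) has_real_derivative 0) (at (1::real))" by simp
    then have "(\<phi>1 has_real_derivative 0) (at 1)"
      by (rule has_field_derivative_transform_within_open[of _ _ _ "{0<..}"]) (use phi1_0 in auto)
    then show ?thesis using DERIV_unique dphi1[OF Tnn[of 1]] by simp
  qed
  have psi0: "\<psi> t = 0" if "t1 < t" "t \<le> 1" for t
  proof (cases "t = 1")
    case True then show ?thesis using psi1 by simp
  next
    case False
    show ?thesis
      by (rule sc_zero[of t 1 \<psi> \<psi>']) (use that False dpsi scl gt psi1 in auto)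
  qed
  have phi1_all: "\<phi>1 t = 0" if "t1 < t" for t
  proof (cases "t < 0")
    case True
    have c: "continuous_on {t..0} \<phi>1"
      by (rule continuous_at_imp_continuous_on) (metis DERIV_isCont atLeastAtMost_iff dphi1 gt less_le_trans that)
    have "\<phi>1 0 = \<phi>1 t"
    proof (rule DERIV_isconst2[OF True c])
      fix z assume z: "t < z" "z < 0"
      then have tz: "t1 < z" using that by simp
      have "\<psi> z = 0" using psi0[OF tz] z by simp
      then show "(\<phi>1 has_real_derivative 0) (at z)" using dphi1[OF gt[OF tz]] by simp
    qed (use True in auto)
    then show ?thesis using phi1_0 by simp
  qed (use phi1_0 in simp)
  have phi_const: "f (y + t *\<^sub>R u) = f y" if "t1 < t" "t < 0" for t
  proof -
    have c: "continuous_on {t..0} (\<lambda>t. f (y + t *\<^sub>R u))"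
      by (rule continuous_at_imp_continuous_on) (metis DERIV_isCont atLeastAtMost_iff dphi gt less_le_trans that(1))
    have "f (y + 0 *\<^sub>R u) = f (y + t *\<^sub>R u)"
    proof (rule DERIV_isconst2[OF that(2) c])
      fix z assume z: "t < z" "z < 0"
      then have tz: "t1 < z" using that by simp
      show "((\<lambda>t. f (y + t *\<^sub>R u)) has_real_derivative 0) (at z)"
        using dphi[OF gt[OF tz]] phi1_all[OF tz] by simp
    qed (use that in auto)
    then show ?thesis by simp
  qed
  define s where "s n = t1 + (- t1) * inverse (real (Suc (Suc n)))" for n
  have s_gt: "t1 < s n" for n using t1neg unfolding s_def by (simp add: mult_neg_pos)
  have s_lt: "s n < 0" for n
  proof -
    have "inverse (real (Suc (Suc n))) < 1" by (simp add: inverse_less_1_iff)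
    then have "(- t1) * inverse (real (Suc (Suc n))) < - t1" using t1neg by simp
    then show ?thesis unfolding s_def by simp
  qed
  have s_lim: "s \<longlonglongrightarrow> t1"
  proof -
    have "(\<lambda>n. t1 + (- t1) * inverse (real (Suc (Suc n)))) \<longlonglongrightarrow> t1 + (- t1) * 0"
      by (intro tendsto_intros LIMSEQ_Suc[OF LIMSEQ_inverse_real_of_nat])
    then show ?thesis unfolding s_def by simp
  qed
  define x where "x n = y + s n *\<^sub>R u" for n
  have xint: "x n \<in> interior K" for n using gt[OF s_gt[of n]] unfolding x_def T_def by simp
  have xlim: "x \<longlonglongrightarrow> y + t1 *\<^sub>R u" unfolding x_def by (intro tendsto_intros s_lim)
  have "y + t1 *\<^sub>R u \<in> K" using closed_sequentially[OF clo _ xlim] xint interior_subset by blast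
  moreover have "y + t1 *\<^sub>R u \<notin> interior K" using t1T unfolding T_def by simp
  ultimately have fr: "y + t1 *\<^sub>R u \<in> frontier K" using clo by (simp add: frontier_def)
  have "filterlim (\<lambda>k. f (x k)) at_top sequentially" using bar[OF _ xlim fr] xint by blast
  moreover have "f (x k) = f y" for k unfolding x_def using phi_const s_gt s_lt by blast
  ultimately have "filterlim (\<lambda>k. f y) at_top sequentially" by simp
  then have "eventually (\<lambda>k. f y + 1 \<le> f y) sequentially" unfolding filterlim_at_top by blast
  then show False by simp
qed

lemma exists_min: assumes mu: "\<mu> > 0"
  shows "\<exists>p \<in> interior K. \<forall>s \<in> interior K.
     (1/2) * (norm (p - c))\<^sup>2 + \<mu> * f p \<le> (1/2) * (norm (s - c))\<^sup>2 + \<mu> * f s"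
proof -
  define F where "F s = (1/2) * (norm (s - c))\<^sup>2 + \<mu> * f s" for s
  obtain s1 where s1: "s1 \<in> interior K" using ne by blast
  obtain B where B: "B > 0" "\<And>h. norm (D1 s1 h) \<le> norm h * B"
    using bounded_linear.pos_bounded[OF D1_lin[OF s1]] by blast
  define a where "a = \<mu> * B"
  define C0 where "C0 = \<mu> * f s1 - \<mu> * B * norm (c - s1)"
  have a0: "a > 0" unfolding a_def using mu B by simp
  have lowF: "(1/2) * (norm (s - c))\<^sup>2 - a * norm (s - c) + C0 \<le> F s" if s: "s \<in> interior K" for s
  proof -
    have "f s1 + D1 s1 (s - s1) \<le> f s" using conv_ineq[OF s1 s] .
    moreover have "- D1 s1 (s - s1) \<le> norm (s - s1) * B" using B(2)[of "s - s1"] by simp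
    moreover have "norm (s - s1) \<le> norm (s - c) + norm (c - s1)" using norm_triangle_ineq[of "s - c" "c - s1"] by simp
    ultimately have "f s1 - B * (norm (s - c) + norm (c - s1)) \<le> f s"
      using B(1) by (smt (verit) mult.commute mult_left_mono)
    then have "\<mu> * (f s1 - B * (norm (s - c) + norm (c - s1))) \<le> \<mu> * f s"
      using mu by (simp add: mult_left_mono)
    then show ?thesis unfolding F_def a_def C0_def by (simp add: algebra_simps)
  qed
  have quad: "- (a\<^sup>2 / 2) \<le> (1/2) * x\<^sup>2 - a * x" for x :: real
  proof -
    have "0 \<le> (x - a)\<^sup>2" by simp
    then show ?thesis by (simp add: power2_eq_square algebra_simps)
  qed
  have lb: "C0 - a\<^sup>2 / 2 \<le> F s" if "s \<in> interior K" for s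
    using lowF[OF that] quad[of "norm (s - c)"] by simp
  define D where "D = F s1 + 1 - C0"
  define R where "R = 2 * a + 2 * \<bar>D\<bar> + 2"
  have bnd: "norm (s - c) \<le> R" if s: "s \<in> interior K" and Fs: "F s \<le> F s1 + 1" for s
  proof (rule ccontr)
    assume "\<not> norm (s - c) \<le> R"
    then have x: "norm (s - c) > R" by simp
    define x where "x = norm (s - c)"
    have x1: "x \<ge> 1" using x a0 unfolding R_def x_def by simp
    have x2: "x / 2 - a \<ge> \<bar>D\<bar> + 1" using x unfolding R_def x_def by simp
    have "1 * (\<bar>D\<bar> + 1) \<le> x * (x / 2 - a)" by (rule mult_mono) (use x1 x2 in auto)
    then have "D < (1/2) * x\<^sup>2 - a * x" by (simp add: power2_eq_square algebra_simps)
    then show False using lowF[OF s] Fs unfolding D_def x_def by simp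
  qed
  define m where "m = Inf (F ` interior K)"
  have bddF: "bdd_below (F ` interior K)" using lb by (intro bdd_belowI2) auto
  have m_le: "m \<le> F s" if "s \<in> interior K" for s
    unfolding m_def using bddF that by (simp add: cInf_lower)
  have "\<forall>n. \<exists>s. s \<in> interior K \<and> F s < m + inverse (real (Suc n))"
  proof
    fix n
    have "m < m + inverse (real (Suc n))" by simp
    moreover have ne': "F ` interior K \<noteq> {}" using ne by auto
    ultimately have "\<exists>y\<in>F ` interior K. y < m + inverse (real (Suc n))"
      using cInf_less_iff[OF ne' bddF] unfolding m_def[symmetric] by blast
    then show "\<exists>s. s \<in> interior K \<and> F s < m + inverse (real (Suc n))" by blast
  qed
  then obtain x where x: "\<And>n. x n \<in> interior K" "\<And>n. F (x n) < m + inverse (real (Suc n))"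
    by metis
  have inv_le1: "inverse (real (Suc n)) \<le> 1" for n by (simp add: inverse_le_1_iff)
  have Fx: "F (x n) \<le> F s1 + 1" for n using x(2)[of n] m_le[OF s1] inv_le1[of n] by simp
  have "bounded (range x)"
  proof -
    have "norm (x n) \<le> R + norm c" for n
      using bnd[OF x(1) Fx, of n] norm_triangle_ineq[of "x n - c" c] by simp
    then show ?thesis unfolding bounded_iff by blast
  qed
  then obtain p r where r: "strict_mono r" and lim: "(x \<circ> r) \<longlonglongrightarrow> p"
    using bounded_imp_convergent_subsequence by blast
  have pK: "p \<in> K" by (rule closed_sequentially[OF clo _ lim]) (use x(1) in \<open>simp add: subsetD[OF interior_subset]\<close>)
  have "p \<notin> frontier K"
  proof
    assume fr: "p \<in> frontier K"
    have "filterlim (\<lambda>k. f ((x \<circ> r) k)) at_top sequentially"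
      by (rule bar[OF _ lim fr]) (use x(1) in simp)
    then have ev: "eventually (\<lambda>k. (m + 1) / \<mu> + 1 \<le> f ((x \<circ> r) k)) sequentially"
      unfolding filterlim_at_top by blast
    have bf: "f ((x \<circ> r) k) \<le> (m + 1) / \<mu>" for k
    proof -
      have "F (x (r k)) \<le> m + 1" using x(2)[of "r k"] inv_le1[of "r k"] by simp
      moreover have "0 \<le> (1/2) * (norm (x (r k) - c))\<^sup>2" by simp
      ultimately have "\<mu> * f (x (r k)) \<le> m + 1" unfolding F_def by linarith
      then show ?thesis using mu by (simp add: field_simps)
    qed
    have "eventually (\<lambda>k. False) sequentially" using ev
    proof (rule eventually_mono)
      fix k assume "(m + 1) / \<mu> + 1 \<le> f ((x \<circ> r) k)"
      then show False using bf[of k] by linarith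
    qed
    then show False by simp
  qed
  then have pint: "p \<in> interior K" using pK clo by (simp add: frontier_def)
  have "isCont F p"
    unfolding F_def using has_derivative_continuous[OF d1[OF pint]]
    by (intro continuous_intros) auto
  then have lim1: "(\<lambda>n. F ((x \<circ> r) n)) \<longlonglongrightarrow> F p" using isCont_tendsto_compose lim by blast
  have lim2: "(\<lambda>n. F ((x \<circ> r) n)) \<longlonglongrightarrow> m"
  proof (rule tendsto_sandwich[of "\<lambda>n. m" _ _ "\<lambda>n. m + inverse (real (Suc n))"])
    show "\<forall>\<^sub>F n in sequentially. m \<le> F ((x \<circ> r) n)" using m_le x(1) by simp
    show "\<forall>\<^sub>F n in sequentially. F ((x \<circ> r) n) \<le> m + inverse (real (Suc n))"
    proof (intro always_eventually allI)
      fix n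
      have "n \<le> r n" using seq_suble[OF r] .
      then have iv: "inverse (real (Suc (r n))) \<le> inverse (real (Suc n))" by (simp add: le_imp_inverse_le)
      have "F (x (r n)) < m + inverse (real (Suc (r n)))" using x(2)[of "r n"] .
      then show "F ((x \<circ> r) n) \<le> m + inverse (real (Suc n))" using iv unfolding o_def by linarith
    qed
    show "(\<lambda>n. m) \<longlonglongrightarrow> m" by simp
    show "(\<lambda>n. m + inverse (real (Suc n))) \<longlonglongrightarrow> m"
      using tendsto_add[OF tendsto_const LIMSEQ_inverse_real_of_nat, of m] by simp
  qed
  have "F p = m" using LIMSEQ_unique[OF lim1 lim2] .
  then show ?thesis using pint m_le unfolding F_def by auto
qed

end

lemma int_dual:
  fixes K :: "'a::euclidean_space set" and w :: 'a
  assumes clo: "closed K" and scl: "\<And>u c. u \<in> K \<Longrightarrow> c \<ge> 0 \<Longrightarrow> c *\<^sub>R u \<in> K"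
    and pos: "\<And>u. u \<in> K \<Longrightarrow> u \<noteq> 0 \<Longrightarrow> u \<bullet> w > 0"
  shows "w \<in> interior (dual_cone K)"
proof (cases "K \<inter> sphere 0 1 = {}")
  case True
  have "K \<subseteq> {0}"
  proof
    fix u assume u: "u \<in> K"
    show "u \<in> {0}"
    proof (rule ccontr)
      assume "u \<notin> {0}"
      then have "u \<noteq> 0" by simp
      then have "(1 / norm u) *\<^sub>R u \<in> K \<inter> sphere 0 1" using scl[OF u, of "1 / norm u"] by simp
      then show False using True by blast
    qed
  qed
  then have "dual_cone K = UNIV" unfolding dual_cone_def by auto
  then show ?thesis by simp
next
  case False
  have cS: "compact (K \<inter> sphere 0 1)" using clo by (simp add: closed_Int_compact)
  have "continuous_on (K \<inter> sphere 0 1) (\<lambda>u. u \<bullet> w)" by (intro continuous_intros)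
  then obtain u0 where u0: "u0 \<in> K \<inter> sphere 0 1" "\<And>u. u \<in> K \<inter> sphere 0 1 \<Longrightarrow> u0 \<bullet> w \<le> u \<bullet> w"
    using continuous_attains_inf[OF cS False] by blast
  define e where "e = u0 \<bullet> w"
  have "u0 \<noteq> 0" using u0(1) by auto
  then have e0: "e > 0" unfolding e_def using pos u0(1) by auto
  have "ball w e \<subseteq> dual_cone K"
  proof
    fix v assume v: "v \<in> ball w e"
    show "v \<in> dual_cone K" unfolding dual_cone_def
    proof (intro CollectI ballI)
      fix u assume u: "u \<in> K"
      show "0 \<le> u \<bullet> v"
      proof (cases "u = 0")
        case False
        define n where "n = (1 / norm u) *\<^sub>R u"
        have nS: "n \<in> K \<inter> sphere 0 1" unfolding n_def using scl[OF u, of "1 / norm u"] False by simp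
        have "e \<le> n \<bullet> w" using u0(2)[OF nS] e_def by simp
        moreover have "\<bar>n \<bullet> (v - w)\<bar> \<le> norm n * norm (v - w)" by (rule Cauchy_Schwarz_ineq2)
        moreover have "norm n = 1" using nS by simp
        moreover have "norm (v - w) < e" using v by (simp add: dist_norm norm_minus_commute)
        ultimately have "n \<bullet> v > 0" by (simp add: inner_diff_right)
        then have "(1 / norm u) * (u \<bullet> v) > 0" unfolding n_def by simp
        then have "0 < u \<bullet> v / norm u" by simp
        then show ?thesis by (auto simp: zero_less_divide_iff)
      qed simp
    qed
  qed
  then show ?thesis using e0 mem_interior by blast
qed

theorem theorem1:
  fixes K :: "(real^'m) set" and f :: "real^'m \<Rightarrow> real" and \<nu> :: real
    and P :: "real^'n^'n" and q :: "real^'n" and A :: "real^'n^'m" and b :: "real^'m"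
    and P' :: "real^'n^'n" and q' :: "real^'n" and A' :: "real^'n^'m" and b' :: "real^'m"
    and xs :: "real^'n" and ss :: "real^'m" and zs :: "real^'m"
    and \<mu>0 lam :: real
  assumes cone_K: "closed K" "convex K" "cone K"
    and proper_K: "interior K \<noteq> {}" "K \<inter> uminus ` K = {0}"
    and barrier: "LHSCB K f \<nu>"
    and data: "psd P" "psd P'"
    and prev_solution: "residual P' q' A' b' xs ss zs = (0, 0)"
      "ss \<in> K" "zs \<in> dual_cone K" "ss \<bullet> zs = 0"
    and pos: "\<mu>0 > 0" "lam > 0"
  shows "let c = ss - lam *\<^sub>R zs;
             s0 = barrier_prox K \<mu>0 f c;
             z0 = (1/lam) *\<^sub>R (s0 - c);
             x0 = xs;
             r0 = (lam/\<mu>0) *\<^sub>R residual P q A b x0 s0 z0;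
             \<mu> = \<mu>0/lam
         in s0 \<in> interior K \<and> z0 \<in> interior (dual_cone K)
            \<and> residual P q A b x0 s0 z0 = \<mu> *\<^sub>R r0
            \<and> z0 = - (\<mu> *\<^sub>R grad f s0)
            \<and> s0 \<bullet> z0 = \<nu> * \<mu>0 / lam"
proof -
  have nu: "\<nu> > 0" and scf: "self_concordant K f"
    and hom: "\<And>s \<tau>. s\<in>interior K \<Longrightarrow> \<tau> > 0 \<Longrightarrow> f (\<tau> *\<^sub>R s) = f s - \<nu> * ln \<tau>"
    using barrier unfolding LHSCB_def by auto
  obtain D1 D2 D3 where
    d1: "\<forall>s\<in>interior K. (f has_derivative D1 s) (at s)" and
    d2: "\<forall>s\<in>interior K. \<forall>h. ((\<lambda>t. D1 t h) has_derivative D2 s h) (at s)" and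
    d3: "\<forall>s\<in>interior K. \<forall>h k. ((\<lambda>t. D2 t h k) has_derivative D3 s h k) (at s)" and
    sc: "\<forall>s\<in>interior K. \<forall>r. 0 \<le> D2 s r r \<and> \<bar>D3 s r r r\<bar> \<le> 2 * (D2 s r r) powr (3/2)"
    using scf unfolding self_concordant_def by blast
  have bar: "\<And>x p. (\<forall>k. x k \<in> interior K) \<Longrightarrow> x \<longlonglongrightarrow> p \<Longrightarrow> p \<in> frontier K
            \<Longrightarrow> filterlim (\<lambda>k. f (x k)) at_top sequentially"
    using scf unfolding self_concordant_def by blast
  interpret L: lhs K f \<nu> D1 D2 D3
    by unfold_locales (use cone_K proper_K nu bar d1 d2 d3 sc hom in auto)
  define c where "c = ss - lam *\<^sub>R zs"
  define F where "F s = (1/2) * (norm (s - c))\<^sup>2 + \<mu>0 * f s" for s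
  define s0 where "s0 = barrier_prox K \<mu>0 f c"
  define z0 where "z0 = (1/lam) *\<^sub>R (s0 - c)"
  obtain p where p: "p \<in> interior K" "\<And>s. s \<in> interior K \<Longrightarrow> F p \<le> F s"
    using L.exists_min[OF pos(1), of c] unfolding F_def by blast
  have "is_arg_min F (\<lambda>x. x \<in> interior K) p" using p by (simp add: is_arg_min_linorder)
  then have am: "is_arg_min F (\<lambda>x. x \<in> interior K) s0"
    unfolding s0_def barrier_prox_def arg_min_on_def arg_min_def F_def[abs_def] by (rule someI)
  then have s0i: "s0 \<in> interior K" and s0m: "\<And>s. s \<in> interior K \<Longrightarrow> F s0 \<le> F s"
    by (auto simp: is_arg_min_linorder)
  have Fd: "(F has_derivative (\<lambda>h. (s0 - c) \<bullet> h + \<mu>0 * D1 s0 h)) (at s0)"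
  proof -
    have e: "F = (\<lambda>s. (1/2) * ((s - c) \<bullet> (s - c)) + \<mu>0 * f s)"
      unfolding F_def by (simp add: power2_norm_eq_inner)
    show ?thesis unfolding e
      by (auto intro!: derivative_eq_intros L.d1[OF s0i] simp: inner_commute algebra_simps)
  qed
  have evm: "eventually (\<lambda>y. F s0 \<le> F y) (at s0)"
  proof -
    have "eventually (\<lambda>y. y \<in> interior K) (nhds s0)"
      by (rule eventually_nhds_in_open) (use s0i in auto)
    then show ?thesis unfolding eventually_at_filter by (rule eventually_mono) (use s0m in auto)
  qed
  have z: "(\<lambda>h. (s0 - c) \<bullet> h + \<mu>0 * D1 s0 h) = (\<lambda>h. 0)"
    using has_derivative_local_min[OF Fd evm] .
  define g where "g = - (1/\<mu>0) *\<^sub>R (s0 - c)"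
  have D1g: "D1 s0 h = g \<bullet> h" for h
  proof -
    have "(s0 - c) \<bullet> h + \<mu>0 * D1 s0 h = 0" using fun_cong[OF z, of h] by simp
    moreover have "g \<bullet> h = - ((s0 - c) \<bullet> h) / \<mu>0" unfolding g_def by simp
    ultimately have "\<mu>0 * D1 s0 h = \<mu>0 * (g \<bullet> h)" using pos(1) by (simp add: field_simps)
    then show ?thesis using pos(1) by simp
  qed
  have D1eq: "D1 s0 = (\<lambda>h. g \<bullet> h)" using D1g by auto
  have gr: "grad f s0 = g"
  proof -
    have ex: "\<exists>g'. (f has_derivative (\<lambda>h. g' \<bullet> h)) (at s0)"
      using L.d1[OF s0i] D1eq by auto
    define g' where "g' = grad f s0"
    have "(f has_derivative (\<lambda>h. g' \<bullet> h)) (at s0)"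
      unfolding g'_def grad_def by (rule someI_ex[OF ex])
    then have "(\<lambda>h. g' \<bullet> h) = D1 s0" using has_derivative_unique L.d1[OF s0i] by blast
    then have "(\<lambda>h. g' \<bullet> h) = (\<lambda>h. g \<bullet> h)" using D1eq by simp
    then have "g' \<bullet> (g' - g) = g \<bullet> (g' - g)" by metis
    then have "(g' - g) \<bullet> (g' - g) = 0" by (simp add: inner_diff_left)
    then show ?thesis unfolding g'_def by simp
  qed
  have zg: "z0 = - ((\<mu>0/lam) *\<^sub>R grad f s0)"
    unfolding gr g_def z0_def using pos by (simp add: field_simps)
  have inner: "s0 \<bullet> z0 = \<nu> * \<mu>0 / lam"
  proof -
    have "g \<bullet> s0 = - \<nu>" using L.hom_deriv[OF s0i] D1g by simp
    moreover have "g \<bullet> s0 = - ((s0 - c) \<bullet> s0) / \<mu>0" unfolding g_def by simp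
    ultimately have "(s0 - c) \<bullet> s0 = \<nu> * \<mu>0" using pos(1) by (simp add: field_simps)
    then show ?thesis unfolding z0_def by (simp add: inner_commute)
  qed
  have zint: "z0 \<in> interior (dual_cone K)"
  proof (rule int_dual[OF cone_K(1) L.scale_mem])
    fix u assume u: "u \<in> K" "u \<noteq> 0"
    have "g \<bullet> u < 0" using L.D1_neg[OF s0i u] D1g by simp
    then have "(s0 - c) \<bullet> u > 0" unfolding g_def using pos(1) by (simp add: zero_less_divide_iff)
    then show "u \<bullet> z0 > 0" unfolding z0_def using pos(2) by (simp add: inner_commute)
  qed
  have res: "residual P q A b xs s0 z0 = (\<mu>0/lam) *\<^sub>R ((lam/\<mu>0) *\<^sub>R residual P q A b xs s0 z0)"
    using pos by simp
  show ?thesis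
    unfolding Let_def c_def[symmetric] s0_def[symmetric] z0_def[symmetric]
    using s0i zint res zg inner by blast
qed

end
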